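(* In the setting of the context, let $B\ge1$ and suppose $k_{B+1}=k_B=:k$. Then $$\mathrm{Pow}(B)-\mathrm{Pow}(B+1)=\mathbb{E}\Bigl[q(\mathcal{X})\,\binom{B}{k}q(\mathcal{X})^k(1-q(\mathcal{X}))^{B-k}\Bigr]$$ (interpreted as $0$ when $k<0$), i.e. $\mathbb{E}[q(\mathcal{X})\,\mathbb{P}(\mathrm{Binomial}(B,q(\mathcal{X}))=k\mid\mathcal{X})]$, and moreover $$\mathrm{Pow}(B)-\mathrm{Pow}(B+1)\le \frac{1}{\sqrt{2\pi(B+1)}}\sqrt{\frac{\alpha}{1-\alpha}}.$$
   Context: Let $\mathcal{X}$ be a random observed dataset taking values in a space on which a finite group $\mathcal{G}$ acts (write $\mathcal{X}^\pi$ for the action of $\pi\in\mathcal{G}$; the identity of $\mathcal{G}$ fixes every dataset), and let $T$ be a real-valued test statistic. Fix $\alpha\in(0,1)$. For an integer $B\ge1$, let $\pi_1,\dots,\pi_B$ be i.i.d. uniform on $\mathcal{G}$, independent of $\mathcal{X}$. The Monte Carlo permutation $p$-value is $p_B(\mathcal{X})=\bigl(1+\sum_{i=1}^B \mathbf{1}\{T(\mathcal{X}^{\pi_i})\ge T(\mathcal{X})\}\bigr)/(B+1)$, and the test rejects iff $p_B(\mathcal{X})\le\alpha$. Define $q(\mathcal{X})=\mathbb{P}(T(\mathcal{X}^\pi)\ge T(\mathcal{X})\mid \mathcal{X})$ for $\pi$ uniform on $\mathcal{G}$ independent of $\mathcal{X}$ (so $q(\mathcal{X})\in[1/|\mathcal{G}|,1]$),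 $R_B=\sum_{i=1}^B \mathbf{1}\{T(\mathcal{X}^{\pi_i})\ge T(\mathcal{X})\}$ (so $R_B\mid\mathcal{X}\sim\mathrm{Binomial}(B,q(\mathcal{X}))$), and the critical count $k_B=\lfloor (B+1)\alpha\rfloor-1$ for integers $B\ge 0$. Then $\{p_B(\mathcal{X})\le\alpha\}=\{R_B\le k_B\}$. The conditional rejection probability is $\phi_B(\mathcal{X})=\mathbb{P}(R_B\le k_B\mid\mathcal{X})$ and the (unconditional) power is $\mathrm{Pow}(B)=\mathbb{E}[\phi_B(\mathcal{X})]=\mathbb{E}\bigl[\mathbb{P}(\mathrm{Binomial}(B,q(\mathcal{X}))\le k_B\mid\mathcal{X})\bigr]$, for $B\ge1$. *)

theory Defs
  imports "HOL-Probability.Probability" "HOL-Algebra.Group_Action"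
begin

definition kcrit :: "real \<Rightarrow> nat \<Rightarrow> int" where
  "kcrit \<alpha> B = \<lfloor>(real B + 1) * \<alpha>\<rfloor> - 1"

text \<open>q(x) = P(T(x^pi) >= T(x)) for pi uniform on the finite group G.\<close>
definition qfun :: "('g, 'm) monoid_scheme \<Rightarrow> ('g \<Rightarrow> 'x \<Rightarrow> 'x) \<Rightarrow> ('x \<Rightarrow> real) \<Rightarrow> 'x \<Rightarrow> real" where
  "qfun G act T x = real (card {\<pi> \<in> carrier G. T (act \<pi> x) \<ge> T x}) / real (card (carrier G))"

definition phi :: "real \<Rightarrow> nat \<Rightarrow> real \<Rightarrow> real" where
  "phi \<alpha> B p = measure_pmf.prob (binomial_pmf B p) {j. int j \<le> kcrit \<alpha> B}"

definition Pow :: "'w measure \<Rightarrow> ('w \<Rightarrow> 'x) \<Rightarrow> ('g, 'm) monoid_scheme \<Rightarrow> ('g \<Rightarrow> 'x \<Rightarrow> 'x)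
    \<Rightarrow> ('x \<Rightarrow> real) \<Rightarrow> real \<Rightarrow> nat \<Rightarrow> real" where
  "Pow M X G act T \<alpha> B = integral\<^sup>L M (\<lambda>\<omega>. phi \<alpha> B (qfun G act T (X \<omega>)))"

end

theory Submission
  imports Defs "HOL-Real_Asymp.Real_Asymp"
begin

definition dd :: "nat \<Rightarrow> real" where
  "dd n = ln (fact n) - (real n + 1/2) * ln (real n) + real n"

lemma dd_diff:
  assumes "n \<ge> 1"
  shows "dd n - dd (Suc n) = (real n + 1/2) * (ln (real n + 1) - ln (real n)) - 1"
proof -
  have "ln (fact (Suc n) :: real) = ln (real n + 1) + ln (fact n)"
    by (simp add: ln_mult add.commute)
  then show ?thesis unfolding dd_def by (simp add: algebra_simps)
qed

lemma dd_dec: assumes "n \<ge> 1" shows "dd (Suc n) \<le> dd n"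
proof -
  have "ln (real n + 1) - ln (real n) \<ge> 2 * ((real n + 1) - real n) / (real n + (real n + 1))"
    using assms by (intro ln_inverse_approx_ge) auto
  hence "ln (real n + 1) - ln (real n) \<ge> 2 / (2 * real n + 1)" by simp
  hence "(real n + 1/2) * (ln (real n + 1) - ln (real n)) \<ge> (real n + 1/2) * (2 / (2 * real n + 1))"
    by (intro mult_left_mono) auto
  also have "(real n + 1/2) * (2 / (2 * real n + 1)) = 1" by (simp add: field_simps)
  finally show ?thesis using dd_diff[OF assms] by simp
qed

lemma dd_inc: assumes "n \<ge> 1" shows "dd n - 1 / (4 * real n) \<le> dd (Suc n) - 1 / (4 * (real n + 1))"
proof -
  have "ln (real n + 1) - ln (real n) \<le> 1 * (inverse (real n) + inverse (real n + 1)) / 2"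
    using assms by (intro ln_inverse_approx_le) auto
  hence "(real n + 1/2) * (ln (real n + 1) - ln (real n)) \<le> (real n + 1/2) * ((inverse (real n) + inverse (real n + 1)) / 2)"
    by (intro mult_left_mono) auto
  also have "\<dots> = 1 + 1 / (4 * real n) - 1 / (4 * (real n + 1))" using assms
    by (simp add: field_simps power2_eq_square) (simp add: divide_simps algebra_simps)
  finally show ?thesis using dd_diff[OF assms] by simp
qed

lemma dd_mono: assumes "1 \<le> m" "m \<le> n" shows "dd n \<le> dd m"
  using assms(2,1)
proof (induction n rule: dec_induct)
  case base then show ?case by simp
next
  case (step k) then show ?case using dd_dec[of k] by simp
qed

lemma dd_mono2: assumes "1 \<le> m" "m \<le> n" shows "dd m - 1 / (4 * real m) \<le> dd n - 1 / (4 * real n)"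
  using assms(2,1)
proof (induction n rule: dec_induct)
  case base then show ?case by simp
next
  case (step k) then show ?case using dd_inc[of k] by (simp add: add.commute)
qed

lemma wallis_fact:
  "(\<Prod>k=1..n. (4*real k^2) / (4*real k^2 - 1)) = 16^n * (fact n)^4 / ((fact (2*n))^2 * (2 * real n + 1))"
proof (induction n)
  case 0 then show ?case by simp
next
  case (Suc n)
  have f: "(fact (2 * Suc n) :: real) = (2 * real n + 2) * (2 * real n + 1) * fact (2 * n)"
    by (simp add: algebra_simps)
  have ne: "4 * (real n + 1)^2 - 1 = (2 * real n + 1) * (2 * real n + 3)"
    by (simp add: algebra_simps power2_eq_square)
  have "(\<Prod>k=1..Suc n. (4*real k^2) / (4*real k^2 - 1)) =
        (\<Prod>k=1..n. (4*real k^2) / (4*real k^2 - 1)) * ((4*(real n + 1)^2) / (4*(real n + 1)^2 - 1))"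
    by (simp add: add.commute)
  also have "\<dots> = 16^n * (fact n)^4 / ((fact (2*n))^2 * (2 * real n + 1)) * ((4*(real n + 1)^2) / ((2 * real n + 1) * (2 * real n + 3)))"
    using Suc.IH ne by simp
  also have "\<dots> = 16^Suc n * (fact (Suc n))^4 / ((fact (2*Suc n))^2 * (2 * real (Suc n) + 1))"
  proof -
    have fs: "(fact (Suc n) :: real) = (real n + 1) * fact n" by simp
    show ?thesis unfolding f fs
      by (simp add: divide_simps) (simp add: algebra_simps power2_eq_square power4_eq_xxxx)
  qed
  finally show ?case .
qed

lemma ln_wallis:
  assumes "n \<ge> 1"
  shows "ln (\<Prod>k=1..n. (4*real k^2) / (4*real k^2 - 1)) =
         4 * dd n - 2 * dd (2*n) - ln 2 + ln (real n) - ln (2 * real n + 1)"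
proof -
  have n0: "real n > 0" using assms by simp
  have l1: "ln (fact n :: real) = dd n + (real n + 1/2) * ln (real n) - real n"
    unfolding dd_def by simp
  have l2: "ln (fact (2*n) :: real) = dd (2*n) + (2 * real n + 1/2) * (ln 2 + ln (real n)) - 2 * real n"
    unfolding dd_def using n0 by (simp add: ln_mult)
  have "ln (\<Prod>k=1..n. (4*real k^2) / (4*real k^2 - 1)) =
        ln (16^n * (fact n)^4 / ((fact (2*n))^2 * (2 * real n + 1)))" by (simp only: wallis_fact)
  also have "\<dots> = real n * ln 16 + 4 * ln (fact n) - (2 * ln (fact (2*n)) + ln (2 * real n + 1))"
    using n0 by (simp add: ln_div ln_mult ln_realpow)
  also have "ln (16::real) = 4 * ln 2"
    using ln_realpow[of 2 4] by simp
  finally show ?thesis unfolding l1 l2 by (simp add: algebra_simps)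
qed

lemma dd_lower:
  assumes "m \<ge> 1"
  shows "ln (2 * pi) / 2 \<le> dd m"
proof -
  define W where "W n = (\<Prod>k=1..n. (4*real k^2) / (4*real k^2 - 1))" for n
  have lim1: "(\<lambda>n. ln (W n)) \<longlonglongrightarrow> ln (pi / 2)"
    unfolding W_def by (intro tendsto_ln wallis) simp
  have lim2: "(\<lambda>n. 2 * dd m - 2 * ln 2 + 1 / (4 * real n)) \<longlonglongrightarrow> 2 * dd m - 2 * ln 2"
    by real_asymp
  have ev: "eventually (\<lambda>n. ln (W n) \<le> 2 * dd m - 2 * ln 2 + 1 / (4 * real n)) sequentially"
    using eventually_ge_at_top[of m]
  proof eventually_elim
    case (elim n)
    have n1: "n \<ge> 1" using elim assms by simp
    have n0: "real n > 0" using n1 by simp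
    have a: "dd n - 1 / (4 * real n) \<le> dd (2*n) - 1 / (4 * real (2*n))"
      using dd_mono2[of n "2*n"] n1 by simp
    have b: "dd n \<le> dd m" using dd_mono[of m n] elim assms by simp
    have c: "ln (real n) - ln (2 * real n + 1) \<le> - ln 2"
    proof -
      have "ln (2 * real n) \<le> ln (2 * real n + 1)" using n0 by simp
      thus ?thesis using n0 by (simp add: ln_mult)
    qed
    have "ln (W n) = 4 * dd n - 2 * dd (2*n) - ln 2 + ln (real n) - ln (2 * real n + 1)"
      unfolding W_def by (rule ln_wallis[OF n1])
    also have "\<dots> \<le> 2 * dd m - 2 * ln 2 + 1 / (4 * real n)"
    proof -
      have e: "1 / (4 * real (2*n)) = 1 / (8 * real n)" by simp
      have e2: "1 / (4 * real n) = 2 * (1 / (8 * real n))" by simp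
      have a': "dd n - dd (2*n) \<le> 1 / (8 * real n)" using a unfolding e e2 by linarith
      show ?thesis unfolding e2 using a' b c by linarith
    qed
    finally show ?case .
  qed
  have "ln (pi / 2) \<le> 2 * dd m - 2 * ln 2"
    by (rule LIMSEQ_le[OF lim1 lim2]) (use ev in \<open>auto simp: eventually_sequentially\<close>)
  moreover have "ln (2 * pi) = ln (pi / 2) + 2 * ln 2"
  proof -
    have "2 * pi = (pi / 2) * 4" by simp
    hence "ln (2 * pi) = ln (pi / 2) + ln 4" by (simp only: ln_mult) (simp add: ln_mult pi_gt_zero)
    moreover have "ln (4::real) = 2 * ln 2" using ln_realpow[of 2 2] by simp
    ultimately show ?thesis by simp
  qed
  ultimately show ?thesis by simp
qed

lemma binom_local:
  fixes m r :: nat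
  assumes "m \<ge> 1" "r \<ge> 1"
  shows "real ((m + r) choose m) * (real m / real (m + r))^m * (real r / real (m + r))^r
         \<le> sqrt (real (m + r) / (real m * real r)) / sqrt (2 * pi)"
proof -
  define n where "n = m + r"
  have m0: "real m > 0" and r0: "real r > 0" and n0: "real n > 0" using assms by (auto simp: n_def)
  have nr: "real n = real m + real r" by (simp add: n_def)
  have C: "real (n choose m) = fact n / (fact m * fact r)"
    using binomial_fact[of m n] by (simp add: n_def)
  have pos: "real (n choose m) * (real m / real n)^m * (real r / real n)^r > 0"
    using m0 r0 n0 by (auto simp: n_def intro!: mult_pos_pos)
  have "ln (real (n choose m) * (real m / real n)^m * (real r / real n)^r)
      = ln (fact n) - ln (fact m) - ln (fact r) + real m * (ln (real m) - ln (real n)) + real r * (ln (real r) - ln (real n))"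
    unfolding C using m0 r0 n0 by (simp add: ln_mult ln_div ln_realpow)
  also have "\<dots> = dd n - dd m - dd r + (ln (real n) - ln (real m) - ln (real r)) / 2"
  proof -
    have "real m * ln (real n) + real r * ln (real n) = real n * ln (real n)" using nr by (simp add: algebra_simps)
    then show ?thesis unfolding dd_def apply (simp add: algebra_simps nr[symmetric]) apply (simp add: field_simps nr[symmetric]) by (simp add: nr)
  qed
  also have "\<dots> \<le> (ln (real n) - ln (real m) - ln (real r)) / 2 - ln (2 * pi) / 2"
    using dd_mono[of m n] dd_lower[of r] assms by (simp add: n_def)
  also have "\<dots> = ln (sqrt (real n / (real m * real r)) / sqrt (2 * pi))"
    using m0 r0 n0 by (simp add: ln_div ln_mult ln_sqrt pi_gt_zero)
  finally show ?thesis
    using pos m0 r0 n0 unfolding n_def[symmetric]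
    by (subst (asm) ln_le_cancel_iff) (auto simp: pi_gt_zero)
qed

lemma amgm2:
  fixes a b :: nat and q :: real
  assumes "a \<ge> 1" "b \<ge> 1" "0 \<le> q" "q \<le> 1"
  shows "q^a * (1-q)^b \<le> (real a / real (a+b))^a * (real b / real (a+b))^b"
proof (cases "q = 0 \<or> q = 1")
  case True
  then show ?thesis using assms by (auto simp: zero_power)
next
  case False
  define p where "p = real a / real (a+b)"
  have a0: "real a > 0" and b0: "real b > 0" using assms by auto
  have p0: "0 < p" and p1: "p < 1" using a0 b0 by (auto simp: p_def field_simps)
  have q0: "0 < q" and q1: "q < 1" using False assms by auto
  have 1: "1 - p = real b / real (a+b)" unfolding p_def using a0 b0 by (simp add: field_simps)
  have "ln (q/p) \<le> q/p - 1" using q0 p0 by (intro ln_le_minus_one) simp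
  hence i1: "real a * ln (q/p) \<le> real a * (q/p - 1)" using a0 by simp
  have "ln ((1-q)/(1-p)) \<le> (1-q)/(1-p) - 1" using q1 p1 by (intro ln_le_minus_one) simp
  hence i2: "real b * ln ((1-q)/(1-p)) \<le> real b * ((1-q)/(1-p) - 1)" using b0 by simp
  have "real a * (q/p - 1) + real b * ((1-q)/(1-p) - 1) = 0"
    unfolding 1 unfolding p_def using a0 b0 by (simp add: field_simps)
  hence "real a * ln (q/p) + real b * ln ((1-q)/(1-p)) \<le> 0" using i1 i2 by linarith
  hence "ln (q^a * (1-q)^b) \<le> ln (p^a * (1-p)^b)"
    using q0 q1 p0 p1 by (simp add: ln_mult ln_realpow ln_div algebra_simps)
  hence "q^a * (1-q)^b \<le> p^a * (1-p)^b"
    using q0 q1 p0 p1 by (subst (asm) ln_le_cancel_iff) auto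
  then show ?thesis using 1 unfolding p_def by simp
qed

lemma aux_alg:
  fixes x y n c :: real
  assumes "x > 0" "y > 0" "n > 0" "c > 0"
  shows "(x / n)^2 * (n / (x * y)) / c = x / y / (c * n)"
  using assms by (simp add: field_simps power2_eq_square)

lemma pointwise_bound:
  fixes k B :: nat and \<alpha> q :: real
  assumes "k < B" "real (Suc k) \<le> (real B + 1) * \<alpha>" "0 < \<alpha>" "\<alpha> < 1" "0 \<le> q" "q \<le> 1"
  shows "q * (real (B choose k) * q^k * (1-q)^(B-k)) \<le> 1 / sqrt (2 * pi * (real B + 1)) * sqrt (\<alpha> / (1 - \<alpha>))"
proof -
  define a where "a = Suc k"
  define b where "b = B - k"
  have ab: "a + b = Suc B" using assms(1) by (simp add: a_def b_def)
  have a1: "a \<ge> 1" and b1: "b \<ge> 1" using assms(1) by (auto simp: a_def b_def)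
  have ra: "real a > 0" and rb: "real b > 0" using a1 b1 by auto
  have rn: "real (a + b) = real B + 1" using ab by simp
  have Cb: "real (B choose k) = real a / real (a+b) * real ((a+b) choose a)"
  proof -
    have e: "real (Suc B) * real (B choose k) = real (Suc k) * real (Suc B choose Suc k)"
      using Suc_times_binomial[of k B] by (metis of_nat_mult)
    have "real (B choose k) = real (Suc B) * real (B choose k) / real (Suc B)"
      by (simp del: binomial_Suc_Suc of_nat_Suc)
    also have "\<dots> = real (Suc k) * real (Suc B choose Suc k) / real (Suc B)"
      by (simp only: e)
    also have "\<dots> = real (Suc k) / real (Suc B) * real (Suc B choose Suc k)"
      by (simp del: binomial_Suc_Suc of_nat_Suc)
    finally show ?thesis unfolding ab unfolding a_def .
  qed
  have "q * (real (B choose k) * q^k * (1-q)^(B-k)) = real (B choose k) * (q^a * (1-q)^b)"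
    by (simp add: a_def b_def)
  also have "\<dots> \<le> real (B choose k) * ((real a / real (a+b))^a * (real b / real (a+b))^b)"
    by (intro mult_left_mono amgm2 a1 b1 assms) simp
  also have "\<dots> = real a / real (a+b) * (real ((a+b) choose a) * (real a / real (a+b))^a * (real b / real (a+b))^b)"
    unfolding Cb by simp
  also have "\<dots> \<le> real a / real (a+b) * (sqrt (real (a + b) / (real a * real b)) / sqrt (2 * pi))"
    by (intro mult_left_mono binom_local a1 b1) simp
  also have "\<dots> = sqrt (real a / real b / (2 * pi * real (a+b)))"
  proof -
    have "real a / real (a+b) = sqrt ((real a / real (a+b))^2)" by simp
    hence "real a / real (a+b) * (sqrt (real (a + b) / (real a * real b)) / sqrt (2 * pi))
        = sqrt ((real a / real (a+b))^2 * (real (a + b) / (real a * real b)) / (2 * pi))"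
      by (simp add: real_sqrt_mult real_sqrt_divide)
    also have "(real a / real (a+b))^2 * (real (a + b) / (real a * real b)) / (2 * pi) = real a / real b / (2 * pi * real (a+b))"
      using ra rb pi_gt_zero by (intro aux_alg) auto
    finally show ?thesis .
  qed
  also have "\<dots> \<le> sqrt (\<alpha> / (1 - \<alpha>) / (2 * pi * real (a+b)))"
  proof -
    have "real a \<le> (real B + 1) * \<alpha>" using assms(2) a_def by simp
    also have "real B + 1 = real a + real b" using rn by simp
    finally have "real a * (1 - \<alpha>) \<le> \<alpha> * real b" by (simp add: algebra_simps)
    hence "real a / real b \<le> \<alpha> / (1 - \<alpha>)" using rb assms by (simp add: field_simps)
    thus ?thesis using rb ra by (intro real_sqrt_le_mono divide_right_mono) auto
  qed
  also have "\<dots> = 1 / sqrt (2 * pi * (real B + 1)) * sqrt (\<alpha> / (1 - \<alpha>))"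
    unfolding rn by (simp add: real_sqrt_divide real_sqrt_mult)
  finally show ?thesis .
qed

lemma binom_diff:
  fixes p :: real and B k :: nat
  assumes "k \<le> B"
  shows "(\<Sum>j\<le>k. real (B choose j) * p^j * (1-p)^(B-j)) - (\<Sum>j\<le>k. real (Suc B choose j) * p^j * (1-p)^(Suc B - j))
         = p * (real (B choose k) * p^k * (1-p)^(B-k))"
  using assms
proof (induction k)
  case 0 then show ?case by (simp add: algebra_simps)
next
  case (Suc k)
  have e: "(1-p)^(B-k) = (1-p) * (1-p)^(B - Suc k)" using Suc.prems
    by (metis Suc_diff_Suc Suc_le_lessD power_Suc)
  have e2: "Suc B - Suc k = B - k" by simp
  have c: "real (Suc B choose Suc k) = real (B choose k) + real (B choose Suc k)" by simp
  have "(\<Sum>j\<le>Suc k. real (B choose j) * p^j * (1-p)^(B-j)) - (\<Sum>j\<le>Suc k. real (Suc B choose j) * p^j * (1-p)^(Suc B - j))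
     = ((\<Sum>j\<le>k. real (B choose j) * p^j * (1-p)^(B-j)) - (\<Sum>j\<le>k. real (Suc B choose j) * p^j * (1-p)^(Suc B - j)))
       + real (B choose Suc k) * p^Suc k * (1-p)^(B - Suc k) - real (Suc B choose Suc k) * p^Suc k * (1-p)^(Suc B - Suc k)"
    by simp
  also have "\<dots> = p * (real (B choose k) * p^k * (1-p)^(B-k))
       + real (B choose Suc k) * p^Suc k * (1-p)^(B - Suc k) - (real (B choose k) + real (B choose Suc k)) * p^Suc k * (1-p)^(B - k)"
    using Suc by (simp only: e2 c)
  also have "\<dots> = p * (real (B choose Suc k) * p^Suc k * (1-p)^(B - Suc k))"
    unfolding e by (simp add: algebra_simps)
  finally show ?case .
qed

lemma phi_formula:
  assumes "0 \<le> p" "p \<le> 1"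
  shows "phi \<alpha> B p = (if kcrit \<alpha> B < 0 then 0
           else (\<Sum>j\<le>nat (kcrit \<alpha> B). real (B choose j) * p^j * (1-p)^(B-j)))"
proof -
  have S: "{j. int j \<le> kcrit \<alpha> B} = (if kcrit \<alpha> B < 0 then {} else {..nat (kcrit \<alpha> B)})"
    by auto
  show ?thesis unfolding phi_def S
    using assms by (simp add: measure_measure_pmf_finite)
qed

lemma phi_bounds: "0 \<le> phi \<alpha> B p" "phi \<alpha> B p \<le> 1"
  unfolding phi_def by simp_all


theorem proposition2:
  fixes M :: "'w measure" and N :: "'x measure" and X :: "'w \<Rightarrow> 'x"
    and G :: "('g, 'm) monoid_scheme" and act :: "'g \<Rightarrow> 'x \<Rightarrow> 'x"
    and T :: "'x \<Rightarrow> real" and \<alpha> :: real and B :: nat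
  assumes "prob_space M"
    and "group G" and "finite (carrier G)"
    and "group_action G (space N) act"
    and "\<And>\<pi>. \<pi> \<in> carrier G \<Longrightarrow> act \<pi> \<in> N \<rightarrow>\<^sub>M N"
    and "X \<in> M \<rightarrow>\<^sub>M N"
    and "T \<in> borel_measurable N"
    and "0 < \<alpha>" and "\<alpha> < 1"
    and "B \<ge> 1"
    and "kcrit \<alpha> (B + 1) = kcrit \<alpha> B"
  shows "Pow M X G act T \<alpha> B - Pow M X G act T \<alpha> (B + 1) =
           integral\<^sup>L M (\<lambda>\<omega>. let q = qfun G act T (X \<omega>); k = kcrit \<alpha> B in
              q * (if k < 0 then 0
                   else real (B choose nat k) * q ^ nat k * (1 - q) ^ (B - nat k)))
     \<and> Pow M X G act T \<alpha> B - Pow M X G act T \<alpha> (B + 1)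
         \<le> 1 / sqrt (2 * pi * (real B + 1)) * sqrt (\<alpha> / (1 - \<alpha>))"

proof -
  note assms' = assms
  interpret P: prob_space M by (rule assms(1))
  define Q where "Q \<omega> = qfun G act T (X \<omega>)" for \<omega>
  define K where "K = kcrit \<alpha> B"
  have finC: "finite (carrier G)" by (rule assms(3))
  have Q01: "0 \<le> Q \<omega> \<and> Q \<omega> \<le> 1" for \<omega>
  proof -
    have "card {\<pi> \<in> carrier G. T (act \<pi> (X \<omega>)) \<ge> T (X \<omega>)} \<le> card (carrier G)"
      by (intro card_mono finC) auto
    thus ?thesis unfolding Q_def qfun_def by (cases "card (carrier G) = 0") (auto simp: divide_le_eq_1)
  qed
  have Xm[measurable]: "X \<in> M \<rightarrow>\<^sub>M N" by (rule assms(6))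
  have Tm[measurable]: "T \<in> borel_measurable N" by (rule assms(7))
  have Qm[measurable]: "Q \<in> borel_measurable M"
  proof -
    have eq: "Q \<omega> = (\<Sum>\<pi>\<in>carrier G. of_bool (T (act \<pi> (X \<omega>)) \<ge> T (X \<omega>))) / real (card (carrier G))" for \<omega>
    proof -
      have "carrier G \<inter> {\<pi>. T (act \<pi> (X \<omega>)) \<ge> T (X \<omega>)} = {\<pi> \<in> carrier G. T (act \<pi> (X \<omega>)) \<ge> T (X \<omega>)}" by auto
      thus ?thesis unfolding Q_def qfun_def using finC by simp
    qed
    have "(\<lambda>\<omega>. of_bool (T (act \<pi> (X \<omega>)) \<ge> T (X \<omega>)) :: real) \<in> borel_measurable M" if "\<pi> \<in> carrier G" for \<pi>
    proof -
      have am[measurable]: "act \<pi> \<in> N \<rightarrow>\<^sub>M N" using assms(5) that by simp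
      show ?thesis by measurable
    qed
    hence "(\<lambda>\<omega>. (\<Sum>\<pi>\<in>carrier G. of_bool (T (act \<pi> (X \<omega>)) \<ge> T (X \<omega>)) :: real) / real (card (carrier G))) \<in> borel_measurable M"
      by (intro borel_measurable_divide borel_measurable_sum) auto
    thus ?thesis unfolding eq[abs_def] .
  qed
  have Kc: "kcrit \<alpha> (B + 1) = K" using assms(11) K_def by simp
  have int_phi: "integrable M (\<lambda>\<omega>. phi \<alpha> B' (Q \<omega>))" if "kcrit \<alpha> B' = K" for B'
  proof (rule P.integrable_const_bound[where B=1])
    show "AE x in M. norm (phi \<alpha> B' (Q x)) \<le> 1" using phi_bounds by auto
    define F where "F p = (if K < 0 then 0 else (\<Sum>j\<le>nat K. real (B' choose j) * p^j * (1-p)^(B'-j)))" for p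
    have "(\<lambda>\<omega>. F (Q \<omega>)) \<in> borel_measurable M" unfolding F_def by measurable
    moreover have "phi \<alpha> B' (Q \<omega>) = F (Q \<omega>)" for \<omega>
      using phi_formula[of "Q \<omega>" \<alpha> B'] Q01[of \<omega>] that unfolding F_def by simp
    ultimately show "(\<lambda>\<omega>. phi \<alpha> B' (Q \<omega>)) \<in> borel_measurable M" by simp
  qed
  have i1: "integrable M (\<lambda>\<omega>. phi \<alpha> B (Q \<omega>))" by (rule int_phi) (simp add: K_def)
  have i2: "integrable M (\<lambda>\<omega>. phi \<alpha> (B+1) (Q \<omega>))" by (rule int_phi) (rule Kc)
  have D: "Pow M X G act T \<alpha> B - Pow M X G act T \<alpha> (B + 1) = integral\<^sup>L M (\<lambda>\<omega>. phi \<alpha> B (Q \<omega>) - phi \<alpha> (B+1) (Q \<omega>))"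
    unfolding Pow_def Q_def[symmetric] using i1 i2 by simp
  define tgt where "tgt q = q * (if K < 0 then 0 else real (B choose nat K) * q ^ nat K * (1 - q) ^ (B - nat K))" for q
  have KB: "K < int B" and K1: "K \<ge> 0 \<Longrightarrow> real (Suc (nat K)) \<le> (real B + 1) * \<alpha>"
  proof -
    have f: "real_of_int \<lfloor>(real B + 1) * \<alpha>\<rfloor> \<le> (real B + 1) * \<alpha>" by (rule of_int_floor_le)
    have "(real B + 1) * \<alpha> < real B + 1" using assms(9) by simp
    hence "\<lfloor>(real B + 1) * \<alpha>\<rfloor> < int B + 1" using f by linarith
    thus "K < int B" unfolding K_def kcrit_def by simp
    show "real (Suc (nat K)) \<le> (real B + 1) * \<alpha>" if "K \<ge> 0"
      using f that unfolding K_def kcrit_def by simp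
  qed
  have pw: "phi \<alpha> B (Q \<omega>) - phi \<alpha> (B+1) (Q \<omega>) = tgt (Q \<omega>)" for \<omega>
  proof (cases "K < 0")
    case True then show ?thesis
      using phi_formula[of "Q \<omega>" \<alpha> B] phi_formula[of "Q \<omega>" \<alpha> "B+1"] Q01[of \<omega>] Kc
      unfolding tgt_def K_def by simp
  next
    case False
    have kb: "nat K \<le> B" using KB False by simp
    show ?thesis
      using phi_formula[of "Q \<omega>" \<alpha> B] phi_formula[of "Q \<omega>" \<alpha> "B+1"] Q01[of \<omega>] Kc False
        binom_diff[OF kb, of "Q \<omega>"]
      unfolding tgt_def K_def[symmetric] by simp
  qed
  have part1: "Pow M X G act T \<alpha> B - Pow M X G act T \<alpha> (B + 1) = integral\<^sup>L M (\<lambda>\<omega>. tgt (Q \<omega>))"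
    unfolding D pw ..
  have bnd: "tgt (Q \<omega>) \<le> 1 / sqrt (2 * pi * (real B + 1)) * sqrt (\<alpha> / (1 - \<alpha>))" for \<omega>
  proof (cases "K < 0")
    case True then show ?thesis unfolding tgt_def using assms(8,9) by simp
  next
    case False
    have kb: "nat K < B" using KB False by simp
    show ?thesis unfolding tgt_def using False
      pointwise_bound[OF kb K1 assms(8,9), of "Q \<omega>"] Q01[of \<omega>] by simp
  qed
  have "integral\<^sup>L M (\<lambda>\<omega>. tgt (Q \<omega>)) \<le> integral\<^sup>L M (\<lambda>\<omega>. 1 / sqrt (2 * pi * (real B + 1)) * sqrt (\<alpha> / (1 - \<alpha>)))"
  proof (rule integral_mono)
    show "integrable M (\<lambda>\<omega>. tgt (Q \<omega>))"
      using Bochner_Integration.integrable_diff[OF i1 i2] unfolding pw .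
  qed (use bnd in auto)
  also have "\<dots> = 1 / sqrt (2 * pi * (real B + 1)) * sqrt (\<alpha> / (1 - \<alpha>))"
    by (simp add: P.prob_space)
  finally have part2: "integral\<^sup>L M (\<lambda>\<omega>. tgt (Q \<omega>)) \<le> 1 / sqrt (2 * pi * (real B + 1)) * sqrt (\<alpha> / (1 - \<alpha>))" .
  have tg: "(\<lambda>\<omega>. let q = qfun G act T (X \<omega>); k = kcrit \<alpha> B in
              q * (if k < 0 then 0
                   else real (B choose nat k) * q ^ nat k * (1 - q) ^ (B - nat k))) = (\<lambda>\<omega>. tgt (Q \<omega>))"
    unfolding tgt_def Q_def K_def Let_def ..
  show ?thesis unfolding tg using part1 part2 by simp
qed


end
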